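(* For the Ewens distribution $p^\star$, $p^\star_N(\pi)=\frac{\prod_{B\in\pi}(b-1)!}{n!}$, the restriction operator $r^\star:=r^{p^\star}$ is given by $$w^{r^\star}_{-i}(S,\pi)=\frac{1}{n-s}w(S,\pi_{+i\leadsto\emptyset})+\sum_{B\in\pi}\frac{b}{n-s}w(S,\pi_{+i\leadsto B})$$ for all $N\subseteq\mathbf{U}$, $w\in\mathbb{W}(N)$, $i\in N$, $(S,\pi)\in\mathcal{E}(N\setminus\{i\})$. Moreover, the $r^\star$-Shapley value coincides with the MPW solution: $\mathrm{Sh}^{r^\star}=\mathrm{MPW}$.
   Context: $\mathbf{U}$ is a finite set of players; cardinalities of $N,S,B$ are $n,s,b$. $\Pi(N)$ is the set of partitions of $N$ ($\Pi(\emptyset)=\{\emptyset\}$). A random partition is $p=(p_N)_{N\subseteq\mathbf{U}}$ with $p_N$ a probability distribution on $\Pi(N)$. $\pi_{+i\leadsto B}=(\pi\setminus\{B\})\cup\{B\cup\{i\}\}$ for $B\in\pi$; $\pi_{+i\leadsto\emptyset}=\pi\cup\{\{i\}\}$. Embedded coalitions $\mathcal{E}(N)=\{(S,\pi):S\subseteq N,\pi\in\Pi(N\setminus S)\}$; a TUX game on $N$ is $w:\mathcal{E}(N)\to\mathbb{R}$ with $w(\emptyset,\pi)=0$, $\mathbb{W}(N)$ their set. For a positive random partition $p$, $r^p$ is the restriction operator $w^{r^p}_{-i}(S,\pi)=\frac{n}{n-s}\sum_{B\in\pi\cup\{\emptyset\}}\frac{p_N(\{S\}\cup\pi_{+i\leadsto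 B})}{p_{N\setminus\{i\}}(\{S\}\cup\pi)}w(S,\pi_{+i\leadsto B})$, which yields $w^{r^p}_{-i}\in\mathbb{W}(N\setminus\{i\})$ and is path independent, so $w^{r}_{-T}$ is well defined for $T\subseteq N$. The Shapley value of a TU game $v$ on $N$ is $\mathrm{Sh}_i(v)=\sum_{S\subseteq N\setminus\{i\}}\frac{s!(n-s-1)!}{n!}(v(S\cup\{i\})-v(S))$. For a path independent restriction operator $r$, the $r$-Shapley value is $\mathrm{Sh}^r(w)=\mathrm{Sh}(v^r_w)$ with $v^r_w(S)=w^r_{-(N\setminus S)}(S,\emptyset)$. The MPW solution is $\mathrm{MPW}(w)=\mathrm{Sh}(\bar v^\star_w)$ with $\bar v^\star_w(S)=\sum_{\pi\in\Pi(N\setminus S)}p^\star_{N\setminus S}(\pi)w(S,\pi)$. *)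

theory Defs
  imports Complex_Main "HOL-Library.Disjoint_Sets"
begin

definition Partitions :: "'a set \<Rightarrow> 'a set set set" where
  "Partitions N = {\<pi>. partition_on N \<pi>}"

(* random partition: p N \<pi> is the probability of \<pi> in Pi(N) *)
type_synonym 'a rpart = "'a set \<Rightarrow> 'a set set \<Rightarrow> real"

definition random_partition :: "'a set \<Rightarrow> 'a rpart \<Rightarrow> bool" where
  "random_partition U p \<longleftrightarrow> (\<forall>N \<subseteq> U. (\<forall>\<pi>. p N \<pi> \<noteq> 0 \<longrightarrow> \<pi> \<in> Partitions N)
      \<and> (\<forall>\<pi> \<in> Partitions N. p N \<pi> \<ge> 0) \<and> (\<Sum>\<pi>\<in>Partitions N. p N \<pi>) = 1)"

definition positive_random_partition :: "'a set \<Rightarrow> 'a rpart \<Rightarrow> bool" where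
  "positive_random_partition U p \<longleftrightarrow> random_partition U p \<and>
      (\<forall>N \<subseteq> U. \<forall>\<pi> \<in> Partitions N. p N \<pi> > 0)"

definition ewens :: "'a rpart" where
  "ewens N \<pi> = (if \<pi> \<in> Partitions N
      then (\<Prod>B\<in>\<pi>. fact (card B - 1)) / fact (card N) else 0)"

definition add_to :: "'a set set \<Rightarrow> 'a \<Rightarrow> 'a set \<Rightarrow> 'a set set" where
  "add_to \<pi> i B = (if B = {} then insert {i} \<pi> else insert (insert i B) (\<pi> - {B}))"

definition Embedded :: "'a set \<Rightarrow> ('a set \<times> 'a set set) set" where
  "Embedded N = {(S, \<pi>). S \<subseteq> N \<and> \<pi> \<in> Partitions (N - S)}"

(* TUX games: functions on embedded coalitions, values outside E(N) are irrelevant *)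
type_synonym 'a tux = "'a set \<Rightarrow> 'a set set \<Rightarrow> real"

definition tux_game :: "'a set \<Rightarrow> 'a tux \<Rightarrow> bool" where
  "tux_game N w \<longleftrightarrow> (\<forall>\<pi> \<in> Partitions N. w {} \<pi> = 0)"

definition restr :: "'a rpart \<Rightarrow> 'a set \<Rightarrow> 'a tux \<Rightarrow> 'a \<Rightarrow> 'a tux" where
  "restr p N w i = (\<lambda>S \<pi>. real (card N) / real (card N - card S) *
     (\<Sum>B \<in> insert {} \<pi>. p N (insert S (add_to \<pi> i B)) / p (N - {i}) (insert S \<pi>)
                          * w S (add_to \<pi> i B)))"

fun restr_list :: "'a rpart \<Rightarrow> 'a set \<Rightarrow> 'a tux \<Rightarrow> 'a list \<Rightarrow> 'a tux" where
  "restr_list p N w [] = w"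
| "restr_list p N w (i # is) = restr_list p (N - {i}) (restr p N w i) is"

(* w^r_{-T}: well defined by path independence; we use an arbitrary enumeration of T *)
definition restr_set :: "'a rpart \<Rightarrow> 'a set \<Rightarrow> 'a tux \<Rightarrow> 'a set \<Rightarrow> 'a tux" where
  "restr_set p N w T = restr_list p N w (SOME xs. set xs = T \<and> distinct xs)"

definition shapley :: "'a set \<Rightarrow> ('a set \<Rightarrow> real) \<Rightarrow> 'a \<Rightarrow> real" where
  "shapley N v i = (\<Sum>S \<in> Pow (N - {i}).
      fact (card S) * fact (card N - card S - 1) / fact (card N) * (v (insert i S) - v S))"

definition restricted_tu :: "'a rpart \<Rightarrow> 'a set \<Rightarrow> 'a tux \<Rightarrow> 'a set \<Rightarrow> real" where
  "restricted_tu p N w S = restr_set p N w (N - S) S {}"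

definition r_shapley :: "'a rpart \<Rightarrow> 'a set \<Rightarrow> 'a tux \<Rightarrow> 'a \<Rightarrow> real" where
  "r_shapley p N w = shapley N (restricted_tu p N w)"

definition mpw_tu :: "'a set \<Rightarrow> 'a tux \<Rightarrow> 'a set \<Rightarrow> real" where
  "mpw_tu N w S = (\<Sum>\<pi> \<in> Partitions (N - S). ewens (N - S) \<pi> * w S \<pi>)"

definition MPW :: "'a set \<Rightarrow> 'a tux \<Rightarrow> 'a \<Rightarrow> real" where
  "MPW N w = shapley N (mpw_tu N w)"

end

theory Submission
  imports Defs
begin

definition rem :: "'a set set \<Rightarrow> 'a \<Rightarrow> 'a set set" where
  "rem P i = (\<lambda>C. C - {i}) ` P - {{}}"

definition blk :: "'a set set \<Rightarrow> 'a \<Rightarrow> 'a set" where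
  "blk P i = \<Union>{C\<in>P. i \<in> C} - {i}"

lemma add_to_part:
  assumes "partition_on (M - {i}) P" "i \<in> M" "B \<in> insert {} P"
  shows "partition_on M (add_to P i B)"
proof (cases "B = {}")
  case True
  have "disjnt {i} (\<Union>P)" using assms(1) partition_onD1 by (fastforce simp: disjnt_def)
  then show ?thesis using True assms by (simp add: add_to_def partition_on_insert)
next
  case False
  then have B: "B \<in> P" using assms(3) by auto
  have ni: "i \<notin> \<Union>P" using partition_onD1[OF assms(1)] by auto
  have dj: "\<And>C. C \<in> P \<Longrightarrow> C \<noteq> B \<Longrightarrow> C \<inter> B = {}"
    using partition_onD2[OF assms(1)] B by (auto simp: disjoint_def)
  have "disjnt (insert i B) (\<Union>(P - {B}))"
    unfolding disjnt_def
  proof (rule equals0I)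
    fix x assume x: "x \<in> insert i B \<inter> \<Union>(P - {B})"
    then obtain C where C: "C \<in> P" "C \<noteq> B" "x \<in> C" by auto
    show False
    proof (cases "x = i")
      case True then show False using ni C by auto
    next
      case False then show False using x dj[OF C(1,2)] C(3) by auto
    qed
  qed
  moreover have "partition_on (M - insert i B) (P - {B})"
  proof -
    have u: "\<Union>(P - {B}) = M - insert i B"
    proof
      show "\<Union>(P - {B}) \<subseteq> M - insert i B"
        using dj ni partition_onD1[OF assms(1)] by blast
      show "M - insert i B \<subseteq> \<Union>(P - {B})"
        using partition_onD1[OF assms(1)] by blast
    qed
    have "disjoint (P - {B})"
      using partition_onD2[OF assms(1)] by (auto simp: disjoint_def)
    then show ?thesis using u partition_onD3[OF assms(1)] by (auto simp: partition_on_def)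
  qed
  moreover have "insert i B \<subseteq> M" using assms B partition_onD1[OF assms(1)] by auto
  ultimately show ?thesis using False by (simp add: add_to_def partition_on_insert)
qed

lemma rem_add_to:
  assumes "partition_on (M - {i}) P" "B \<in> insert {} P"
  shows "rem (add_to P i B) i = P \<and> blk (add_to P i B) i = B"
proof -
  have ni: "\<And>C. C \<in> P \<Longrightarrow> i \<notin> C" using partition_onD1[OF assms(1)] by auto
  have ne: "{} \<notin> P" using partition_onD3[OF assms(1)] .
  show ?thesis
  proof (cases "B = {}")
    case True
    have "(\<lambda>C. C - {i}) ` P = P" using ni by (force simp: image_iff)
    moreover have "{C \<in> insert {i} P. i \<in> C} = {{i}}" using ni by auto
    ultimately show ?thesis using True ne by (auto simp: rem_def blk_def add_to_def)
  next
    case False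
    then have B: "B \<in> P" using assms by auto
    have "(\<lambda>C. C - {i}) ` (insert (insert i B) (P - {B})) = P"
      using ni B by (force simp: image_iff)
    moreover have "{C \<in> insert (insert i B) (P - {B}). i \<in> C} = {insert i B}" using ni by auto
    ultimately show ?thesis using False ne ni B by (auto simp: rem_def blk_def add_to_def)
  qed
qed

lemma part_rem:
  assumes "partition_on M Q" "i \<in> M"
  shows "partition_on (M - {i}) (rem Q i) \<and> blk Q i \<in> insert {} (rem Q i)
         \<and> add_to (rem Q i) i (blk Q i) = Q"
proof -
  obtain C0 where C0: "C0 \<in> Q" "i \<in> C0" using assms partition_onD1 by blast
  have dis: "\<And>C. C \<in> Q \<Longrightarrow> C \<noteq> C0 \<Longrightarrow> C \<inter> C0 = {}"
    using partition_onD2[OF assms(1)] C0 by (auto simp: disjoint_def)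
  have sub: "\<And>C. C \<in> Q \<Longrightarrow> C \<subseteq> M" using partition_onD1[OF assms(1)] by auto
  have ne: "{} \<notin> Q" using partition_onD3[OF assms(1)] .
  have set: "{C \<in> Q. i \<in> C} = {C0}" using dis C0 by auto
  have blk: "blk Q i = C0 - {i}" by (simp add: blk_def set)
  have QC: "Q = insert C0 (Q - {C0})" using C0 by blast
  have id1: "(\<lambda>C. C - {i}) ` (Q - {C0}) = Q - {C0}"
  proof -
    have "\<forall>C\<in>Q - {C0}. C - {i} = C" using dis C0 by blast
    then show ?thesis by simp
  qed
  have img: "(\<lambda>C. C - {i}) ` Q = insert (C0 - {i}) (Q - {C0})"
    by (subst QC) (simp only: image_insert id1)
  have "(\<lambda>C. C - {i}) ` Q = (\<inter>) (M - {i}) ` Q"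
    by (rule image_cong) (use sub in auto)
  then have rr: "rem Q i = (\<inter>) (M - {i}) ` Q - {{}}" by (simp add: rem_def)
  have MM: "(M - {i}) \<inter> M = M - {i}" by blast
  have p1: "partition_on (M - {i}) (rem Q i)"
    using partition_on_restrict[OF assms(1), of "M - {i}"] unfolding rr MM .
  show ?thesis
  proof (cases "C0 = {i}")
    case True
    have "rem Q i = Q - {C0}" unfolding rem_def img using True ne by blast
    moreover have "add_to (Q - {C0}) i {} = Q" unfolding add_to_def using True C0 by auto
    ultimately show ?thesis using p1 True blk by simp
  next
    case False
    then have nz: "C0 - {i} \<noteq> {}" using C0 by auto
    have r: "rem Q i = insert (C0 - {i}) (Q - {C0})" unfolding rem_def img using nz ne by blast
    have nin: "C0 - {i} \<notin> Q - {C0}"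
    proof
      assume "C0 - {i} \<in> Q - {C0}"
      then have "(C0 - {i}) \<inter> C0 = {}" using dis by auto
      then show False using nz by auto
    qed
    have e1: "insert (C0 - {i}) (Q - {C0}) - {C0 - {i}} = Q - {C0}" using nin by blast
    have e2: "insert i (C0 - {i}) = C0" using C0 by blast
    have "add_to (rem Q i) i (blk Q i) = insert C0 (Q - {C0})"
      unfolding add_to_def blk r using nz by (simp only: e1 e2 if_False)
    also have "\<dots> = Q" using QC by simp
    finally show ?thesis using p1 blk r by simp
  qed
qed

lemma sum_part_bij:
  assumes "i \<in> M"
  shows "(\<Sum>(P,B)\<in>(SIGMA P:Partitions (M - {i}). insert {} P). g (add_to P i B))
         = (\<Sum>Q\<in>Partitions M. g Q)"
proof (rule sum.reindex_bij_witness[where j="\<lambda>(P,B). add_to P i B" and i="\<lambda>Q. (rem Q i, blk Q i)"])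
  fix Q assume "Q \<in> Partitions M"
  then have "partition_on M Q" by (simp add: Partitions_def)
  from part_rem[OF this assms] show "(case (rem Q i, blk Q i) of (P, B) \<Rightarrow> add_to P i B) = Q"
    and "(rem Q i, blk Q i) \<in> (SIGMA P:Partitions (M - {i}). insert {} P)"
    by (auto simp: Partitions_def)
next
  fix a assume "a \<in> (SIGMA P:Partitions (M - {i}). insert {} P)"
  then obtain P B where a: "a = (P, B)" "partition_on (M - {i}) P" "B \<in> insert {} P"
    by (auto simp: Partitions_def)
  from rem_add_to[OF a(2,3)] show "(rem (case a of (P, B) \<Rightarrow> add_to P i B) i,
          blk (case a of (P, B) \<Rightarrow> add_to P i B) i) = a" using a(1) by simp
  from add_to_part[OF a(2) assms a(3)] show "(case a of (P, B) \<Rightarrow> add_to P i B) \<in> Partitions M"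
    using a(1) by (simp add: Partitions_def)
  show "g (case a of (P, B) \<Rightarrow> add_to P i B) = (case a of (P, B) \<Rightarrow> g (add_to P i B))"
    using a(1) by simp
qed

lemma prod_add_to:
  assumes "finite M" "partition_on (M - {i}) P" "i \<in> M" "B \<in> insert {} P"
  shows "(\<Prod>C\<in>add_to P i B. (fact (card C - 1) :: real))
         = (if B = {} then 1 else real (card B)) * (\<Prod>C\<in>P. fact (card C - 1))"
proof -
  have fin: "finite P" using finite_elements[OF _ assms(2)] assms(1) by simp
  have ni: "\<And>C. C \<in> P \<Longrightarrow> i \<notin> C" using partition_onD1[OF assms(2)] by auto
  show ?thesis
  proof (cases "B = {}")
    case True
    have n1: "{i} \<notin> P" using ni by auto
    have e: "add_to P i B = insert {i} P" using True by (simp add: add_to_def)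
    have "(\<Prod>C\<in>add_to P i B. (fact (card C - 1) :: real)) = fact (card {i} - 1) * (\<Prod>C\<in>P. fact (card C - 1))"
      unfolding e by (rule prod.insert[OF fin n1])
    then show ?thesis using True by simp
  next
    case False
    then have B: "B \<in> P" using assms(4) by auto
    have "B \<subseteq> M" using B partition_onD1[OF assms(2)] by blast
    then have finB: "finite B" using assms(1) finite_subset by blast
    have cB: "card B \<noteq> 0" using finB False by simp
    have n2: "insert i B \<notin> P - {B}" using ni by auto
    have a: "add_to P i B = insert (insert i B) (P - {B})" using False by (simp add: add_to_def)
    have fin2: "finite (P - {B})" using fin by simp
    have "(\<Prod>C\<in>add_to P i B. (fact (card C - 1) :: real))
       = fact (card (insert i B) - 1) * (\<Prod>C\<in>P - {B}. fact (card C - 1))"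
      unfolding a using prod.insert[OF fin2 n2] .
    also have "card (insert i B) - 1 = card B" using ni[OF B] finB by simp
    also have "(fact (card B) :: real) = real (card B) * fact (card B - 1)"
    proof -
      obtain j where "card B = Suc j" using cB not0_implies_Suc by blast
      then show ?thesis by (simp add: fact_Suc)
    qed
    finally have X: "(\<Prod>C\<in>add_to P i B. (fact (card C - 1) :: real))
       = real (card B) * fact (card B - 1) * (\<Prod>C\<in>P - {B}. fact (card C - 1))" .
    have Y: "(\<Prod>C\<in>P. (fact (card C - 1) :: real)) = fact (card B - 1) * (\<Prod>C\<in>P - {B}. fact (card C - 1))"
      by (rule prod.remove[OF fin B])
    show ?thesis unfolding X Y using False by (simp add: mult.assoc)
  qed
qed

lemma ewens_add_to:
  assumes "finite M" "partition_on (M - {i}) P" "i \<in> M" "B \<in> insert {} P"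
  shows "ewens M (add_to P i B) = ewens (M - {i}) P * (if B = {} then 1 else real (card B)) / real (card M)"
proof -
  have pa: "partition_on M (add_to P i B)" by (rule add_to_part[OF assms(2-4)])
  obtain m where m: "card M = Suc m" using assms(1,3) by (metis card_gt_0_iff emptyE gr0_implies_Suc)
  have m2: "card (M - {i}) = m" using m assms by simp
  have "ewens M (add_to P i B) = (\<Prod>C\<in>add_to P i B. (fact (card C - 1) :: real)) / fact (card M)"
    using pa by (simp add: ewens_def Partitions_def)
  also have "\<dots> = (if B = {} then 1 else real (card B)) * (\<Prod>C\<in>P. fact (card C - 1)) / fact (card M)"
    by (simp only: prod_add_to[OF assms])
  also have "ewens (M - {i}) P = (\<Prod>C\<in>P. fact (card C - 1)) / fact m"
    using assms(2) m2 by (simp add: ewens_def Partitions_def)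
  moreover have "(\<Prod>C\<in>P. fact (card C - 1)) = ewens (M - {i}) P * fact m"
    using calculation(2) by simp
  ultimately have "ewens M (add_to P i B) = (if B = {} then 1 else real (card B)) * (ewens (M - {i}) P * fact m) / (real (Suc m) * fact m)"
    unfolding m by (simp add: fact_Suc)
  then show ?thesis unfolding m by simp
qed

lemma ewens_pos:
  assumes "finite M" "partition_on M P"
  shows "ewens M P > 0"
  using assms by (simp add: ewens_def Partitions_def prod_pos)

lemma ewens_insert:
  assumes "finite N" "S \<subseteq> N" "S \<noteq> {}" "partition_on (N - S) X"
  shows "ewens N (insert S X) = ewens (N - S) X * (fact (card S - 1) * fact (card N - card S) / fact (card N))"
proof -
  have d: "disjnt S (\<Union>X)" using partition_onD1[OF assms(4)] by (auto simp: disjnt_def)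
  have p: "partition_on N (insert S X)" using partition_on_insert[OF d] assms by simp
  have nin: "S \<notin> X" using d assms(3) by (auto simp: disjnt_def)
  have fin: "finite X" using finite_elements[OF _ assms(4)] assms(1) by simp
  have c: "card (N - S) = card N - card S" using assms(1,2) by (simp add: card_Diff_subset finite_subset)
  show ?thesis using p assms(4) nin fin unfolding ewens_def Partitions_def c
    by simp
qed

lemma ewens_bad: "ewens N (insert {} X) = 0"
  by (simp add: ewens_def Partitions_def partition_on_def)

lemma alg_aux:
  fixes a b E F fk fm c W :: real
  assumes "a > 0" "b > 0" "E > 0" "F > 0" "fk > 0" "fm > 0"
  shows "a / b * ((E * c / b * (F * (b * fk) / (a * fm))) / (E * (F * fk / fm)) * W) = c / b * W"
  using assms by (simp add: field_simps)

lemma restr_sum: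
  assumes "finite N" "i \<in> N" "S \<subseteq> N - {i}" "partition_on (N - {i} - S) P" "tux_game N w"
  shows "restr ewens N w i S P = (\<Sum>B\<in>insert {} P.
           (if B = {} then 1 else real (card B)) / real (card N - card S) * w S (add_to P i B))"
proof -
  have NS: "N - S - {i} = N - {i} - S" by blast
  have iM: "i \<in> N - S" using assms(2,3) by blast
  have pM: "partition_on (N - S - {i}) P" using assms(4) NS by simp
  show ?thesis
  proof (cases "S = {}")
    case True
    have "\<And>B. B \<in> insert {} P \<Longrightarrow> w S (add_to P i B) = 0"
    proof -
      fix B assume "B \<in> insert {} P"
      from add_to_part[OF pM iM this] have "add_to P i B \<in> Partitions N"
        using True by (simp add: Partitions_def)
      then show "w S (add_to P i B) = 0" using assms(5) True by (simp add: tux_game_def)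
    qed
    then show ?thesis using True by (simp add: restr_def ewens_bad)
  next
    case False
    have fS: "finite S" using assms(1,3) finite_subset by blast
    obtain m where m: "card N = Suc m" using assms(1,2) by (metis card_gt_0_iff emptyE gr0_implies_Suc)
    have m2: "card (N - {i}) = m" using m assms by simp
    have sm: "card S \<le> m" using card_mono[OF _ assms(3)] assms(1) m2 by simp
    obtain k where k: "m - card S = k" by blast
    have k2: "card N - card S = Suc k" using m k sm by simp
    have SN: "S \<subseteq> N" using assms(3) by blast
    have cM: "card (N - S) = Suc k" using k2 card_Diff_subset[OF fS SN] by simp
    show ?thesis
      unfolding restr_def sum_distrib_left
    proof (rule sum.cong[OF refl])
      fix B assume B: "B \<in> insert {} P"
      define c where "c = (if B = {} then 1 else real (card B))"
      have pA: "partition_on (N - S) (add_to P i B)" by (rule add_to_part[OF pM iM B])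
      have e1: "ewens N (insert S (add_to P i B)) = ewens (N - S) (add_to P i B) *
                  (fact (card S - 1) * fact (card N - card S) / fact (card N))"
        by (rule ewens_insert[OF assms(1) _ False pA]) (use assms(3) in auto)
      have e2: "ewens (N - {i}) (insert S P) = ewens (N - {i} - S) P *
                  (fact (card S - 1) * fact (card (N - {i}) - card S) / fact (card (N - {i})))"
        by (rule ewens_insert[OF _ assms(3) False assms(4)]) (use assms(1) in auto)
      have e3: "ewens (N - S) (add_to P i B) = ewens (N - {i} - S) P * c / real (Suc k)"
        using ewens_add_to[OF _ pM iM B] assms(1) cM NS by (simp add: c_def)
      have pos: "ewens (N - {i} - S) P > 0" using ewens_pos[OF _ assms(4)] assms(1) by simp
      have fpos: "(fact (card S - 1) :: real) > 0" by simp
      show "real (card N) / real (card N - card S) *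
          (ewens N (insert S (add_to P i B)) / ewens (N - {i}) (insert S P) * w S (add_to P i B)) =
          (if B = {} then 1 else real (card B)) / real (card N - card S) * w S (add_to P i B)"
        unfolding e1 e2 e3 c_def[symmetric] k2 unfolding m m2 k fact_Suc of_nat_mult
        by (rule alg_aux) (use pos in auto)
    qed
  qed
qed

lemma part1:
  assumes "finite N" "i \<in> N" "S \<subseteq> N - {i}" "partition_on (N - {i} - S) P" "tux_game N w"
  shows "restr ewens N w i S P = 1 / real (card N - card S) * w S (add_to P i {})
              + (\<Sum>B\<in>P. real (card B) / real (card N - card S) * w S (add_to P i B))"
proof -
  have fin: "finite P" using finite_elements[OF _ assms(4)] assms(1) by simp
  have ne: "{} \<notin> P" using partition_onD3[OF assms(4)] .
  have "(\<Sum>B\<in>P. (if B = {} then 1 else real (card B)) / real (card N - card S) * w S (add_to P i B))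
      = (\<Sum>B\<in>P. real (card B) / real (card N - card S) * w S (add_to P i B))"
    by (rule sum.cong) (use ne in auto)
  then show ?thesis unfolding restr_sum[OF assms] using fin ne by simp
qed

lemma restr_tux:
  assumes "finite N" "i \<in> N"
  shows "tux_game (N - {i}) (restr ewens N w i)"
  unfolding tux_game_def restr_def by (simp add: ewens_bad)

lemma consist:
  assumes "finite N" "i \<in> N" "S \<subseteq> N - {i}" "tux_game N w"
  shows "mpw_tu (N - {i}) (restr ewens N w i) S = mpw_tu N w S"
proof -
  define M where "M = N - S"
  have NS: "N - {i} - S = M - {i}" unfolding M_def by blast
  have iM: "i \<in> M" using assms(2,3) unfolding M_def by blast
  have fM: "finite M" using assms(1) unfolding M_def by simp
  have SN: "S \<subseteq> N" using assms(3) by blast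
  have cM: "card N - card S = card M"
    unfolding M_def using card_Diff_subset[OF finite_subset[OF SN assms(1)] SN] by simp
  have "mpw_tu (N - {i}) (restr ewens N w i) S
      = (\<Sum>P\<in>Partitions (M - {i}). ewens (M - {i}) P * restr ewens N w i S P)"
    unfolding mpw_tu_def NS ..
  also have "\<dots> = (\<Sum>P\<in>Partitions (M - {i}). \<Sum>B\<in>insert {} P. ewens M (add_to P i B) * w S (add_to P i B))"
  proof (rule sum.cong[OF refl])
    fix P assume "P \<in> Partitions (M - {i})"
    then have P: "partition_on (M - {i}) P" by (simp add: Partitions_def)
    then have P': "partition_on (N - {i} - S) P" using NS by simp
    show "ewens (M - {i}) P * restr ewens N w i S P
        = (\<Sum>B\<in>insert {} P. ewens M (add_to P i B) * w S (add_to P i B))"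
      unfolding restr_sum[OF assms(1-3) P' assms(4)] sum_distrib_left cM
      by (rule sum.cong[OF refl]) (simp add: ewens_add_to[OF fM P iM])
  qed
  also have "\<dots> = (\<Sum>(P,B)\<in>(SIGMA P:Partitions (M - {i}). insert {} P). ewens M (add_to P i B) * w S (add_to P i B))"
  proof (rule sum.Sigma)
    show "finite (Partitions (M - {i}))" unfolding Partitions_def
      using finitely_many_partition_on[of "M - {i}"] fM by simp
    show "\<forall>P\<in>Partitions (M - {i}). finite (insert {} P)"
      using finite_elements fM by (auto simp: Partitions_def)
  qed
  also have "\<dots> = (\<Sum>Q\<in>Partitions M. ewens M Q * w S Q)"
    by (rule sum_part_bij[OF iM])
  also have "\<dots> = mpw_tu N w S" unfolding mpw_tu_def M_def ..
  finally show ?thesis .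
qed

lemma restr_list_mpw:
  assumes "distinct xs" "finite N" "set xs \<subseteq> N" "tux_game N w" "S \<subseteq> N - set xs"
  shows "mpw_tu (N - set xs) (restr_list ewens N w xs) S = mpw_tu N w S"
  using assms
proof (induction xs arbitrary: N w)
  case Nil
  then show ?case by simp
next
  case (Cons x xs)
  have x: "x \<in> N" using Cons.prems by simp
  have e: "N - set (x # xs) = (N - {x}) - set xs" by auto
  have "mpw_tu (N - set (x # xs)) (restr_list ewens N w (x # xs)) S
      = mpw_tu ((N - {x}) - set xs) (restr_list ewens (N - {x}) (restr ewens N w x) xs) S"
    unfolding e by simp
  also have "\<dots> = mpw_tu (N - {x}) (restr ewens N w x) S"
    by (rule Cons.IH) (use Cons.prems restr_tux[OF _ x] in auto)
  also have "\<dots> = mpw_tu N w S"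
    by (rule consist) (use Cons.prems x in auto)
  finally show ?case .
qed

lemma restricted_eq:
  assumes "finite N" "tux_game N w" "S \<subseteq> N"
  shows "restricted_tu ewens N w S = mpw_tu N w S"
proof -
  define xs where "xs = (SOME xs. set xs = N - S \<and> distinct xs)"
  have "\<exists>xs. set xs = N - S \<and> distinct xs" using assms(1) finite_distinct_list by blast
  then have xs: "set xs = N - S" "distinct xs" unfolding xs_def by (metis (mono_tags, lifting) someI_ex)+
  have NS: "N - set xs = S" using xs assms(3) by blast
  have "restricted_tu ewens N w S = restr_list ewens N w xs S {}"
    unfolding restricted_tu_def restr_set_def xs_def ..
  also have "\<dots> = mpw_tu (N - set xs) (restr_list ewens N w xs) S"
    unfolding NS mpw_tu_def by (simp add: Partitions_def partition_on_empty ewens_def)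
  also have "\<dots> = mpw_tu N w S"
    by (rule restr_list_mpw) (use xs assms NS in auto)
  finally show ?thesis .
qed

theorem lemma1:
  fixes U :: "'a set"
  assumes "finite U"
  shows "(\<forall>N w i S \<pi>. N \<subseteq> U \<longrightarrow> tux_game N w \<longrightarrow> i \<in> N \<longrightarrow> (S, \<pi>) \<in> Embedded (N - {i}) \<longrightarrow>
            restr ewens N w i S \<pi> =
              1 / real (card N - card S) * w S (add_to \<pi> i {})
              + (\<Sum>B\<in>\<pi>. real (card B) / real (card N - card S) * w S (add_to \<pi> i B)))
      \<and> (\<forall>N w. N \<subseteq> U \<longrightarrow> tux_game N w \<longrightarrow> (\<forall>i\<in>N. r_shapley ewens N w i = MPW N w i))"
proof (intro conjI allI impI ballI)
  fix N w i S \<pi>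
  assume N: "N \<subseteq> U" and w: "tux_game N w" and i: "i \<in> N" and E: "(S, \<pi>) \<in> Embedded (N - {i})"
  have fN: "finite N" using N assms finite_subset by blast
  from E have S: "S \<subseteq> N - {i}" and P: "partition_on (N - {i} - S) \<pi>"
    by (auto simp: Embedded_def Partitions_def)
  show "restr ewens N w i S \<pi> =
              1 / real (card N - card S) * w S (add_to \<pi> i {})
              + (\<Sum>B\<in>\<pi>. real (card B) / real (card N - card S) * w S (add_to \<pi> i B))"
    by (rule part1[OF fN i S P w])
next
  fix N w i
  assume N: "N \<subseteq> U" and w: "tux_game N w" and i: "i \<in> N"
  have fN: "finite N" using N assms finite_subset by blast
  show "r_shapley ewens N w i = MPW N w i"
    unfolding r_shapley_def MPW_def shapley_def
  proof (rule sum.cong[OF refl])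
    fix T assume "T \<in> Pow (N - {i})"
    then have T: "T \<subseteq> N" "insert i T \<subseteq> N" using i by auto
    show "fact (card T) * fact (card N - card T - 1) / fact (card N) *
          (restricted_tu ewens N w (insert i T) - restricted_tu ewens N w T) =
          fact (card T) * fact (card N - card T - 1) / fact (card N) *
          (mpw_tu N w (insert i T) - mpw_tu N w T)"
      using restricted_eq[OF fN w T(1)] restricted_eq[OF fN w T(2)] by simp
  qed
qed

end
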